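(* Let $\Gamma$ and the data $s_0,\eta_0,\Xi$ be as in the context. There exists $t_0>0$ such that for every $\mathbf x\in\mathbb R^{n-1}$ and every $t>t_0$: if $u(\mathbf x)\sigma a(t)=\gamma\xi na(s)k$ with $\gamma\in\Gamma$, $\xi\in\Xi$, $n\in N$, $s>s_0$ and $k\in K$, then $\gamma\xi\notin P$.
   Context: $n\ge2$, $G=\mathrm{SO}(n,1)$, $K\cong\mathrm{SO}(n)$ maximal compact. $A=\{a(t)\}$ a one-parameter $\mathbb R$-split torus with $\mathfrak g=\mathfrak g_{-1}\oplus\mathfrak z(A)\oplus\mathfrak g_{+1}$, $\mathrm{Ad}(a(t))=e^{\pm t}$ on $\mathfrak g_{\pm1}$; $M=Z_G(A)\cap K$, $N=\exp\mathfrak g_{+1}$, $\mathfrak g_{+1}\cong\mathbb R^{n-1}$, $u(\mathbf x)=\exp\mathbf x$; $\sigma\in K$ with $\sigma^2=e$, $\sigma a(t)\sigma^{-1}=a(-t)$; $P=MAN$. For compact $\eta\subset N$: $A_s=\{a(t):t\ge s\}$, $\Omega(\eta,s)=\eta A_sK$. $\Gamma\subset G$ discrete, $\Gamma\backslash G$ of finite volume, $\Gamma\backslash\mathbb H^n$ non-compact, with fixed $s_0>0$, compact $\eta_0\subset N$, finite $\Xi\subset G$, $e\in\Xi$, satisfying: (i) $G=\Gamma\Xi\Omega(\eta_0,s_0)$; (ii) $\Gamma\cap\xi N\xi^{-1}$ is a cocompact lattice in $\xi N\xi^{-1}$; (iii) for compact $\eta\subset N$, $\{\gamma:\gamma\Xi\Omega(\eta,s_0)\cap\Omega(\eta,s_0)\neq\emptyset\}$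 is finite; (iv) for each compact $\eta\supseteq\eta_0$ there is $s_1>s_0$ with: $\gamma\xi_1\Omega(\eta,s_0)\cap\xi_2\Omega(\eta,s_1)\neq\emptyset$ implies $\xi_1=\xi_2$, $\gamma\in\xi_1NM\xi_1^{-1}$. *)

theory Defs
  imports "HOL-Analysis.Analysis"
begin

text \<open>Concrete model of G = SO(n,1) (identity component) acting on R^(n+1) with
coordinates indexed by 'm option option: None is the time coordinate e_0,
Some None is e_1, Some (Some i) are the remaining n-1 coordinates, so that
R^(n-1) = real^'m and n = CARD('m) + 1 >= 2.\<close>

type_synonym 'm lmat = "real^'m option option^'m option option"

definition Jform :: "('m::finite) lmat" where
  "Jform = (\<chi> i j. if i = j then (if i = None then -1 else 1) else 0)"

definition Gset :: "('m::finite) lmat set" where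
  "Gset = {g. transpose g ** Jform ** g = Jform \<and> det g = 1 \<and> g $ None $ None > 0}"

definition Kset :: "('m::finite) lmat set" where
  "Kset = {g \<in> Gset. g *v axis None 1 = axis None 1}"

definition aa :: "real \<Rightarrow> ('m::finite) lmat" where
  "aa t = (\<chi> i j.
     if (i = None \<and> j = None) \<or> (i = Some None \<and> j = Some None) then cosh t
     else if (i = None \<and> j = Some None) \<or> (i = Some None \<and> j = None) then sinh t
     else if i = j then 1 else 0)"

text \<open>u(x) = exp X(x), X(x) in g_{+1}; explicitly I + X + X^2/2 (X^3 = 0).\<close>
definition uu :: "real^('m::finite) \<Rightarrow> 'm lmat" where
  "uu x = (let q = (x \<bullet> x) / 2 in (\<chi> i j. case (i, j) of
       (None, None) \<Rightarrow> 1 + q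
     | (None, Some None) \<Rightarrow> - q
     | (None, Some (Some b)) \<Rightarrow> x $ b
     | (Some None, None) \<Rightarrow> q
     | (Some None, Some None) \<Rightarrow> 1 - q
     | (Some None, Some (Some b)) \<Rightarrow> x $ b
     | (Some (Some a), None) \<Rightarrow> x $ a
     | (Some (Some a), Some None) \<Rightarrow> - (x $ a)
     | (Some (Some a), Some (Some b)) \<Rightarrow> (if a = b then 1 else 0)))"

definition Nset :: "('m::finite) lmat set" where
  "Nset = range uu"

definition Mset :: "('m::finite) lmat set" where
  "Mset = {m \<in> Kset. \<forall>t. m ** aa t = aa t ** m}"

definition Pset :: "('m::finite) lmat set" where
  "Pset = {m ** aa t ** v | m t v. m \<in> Mset \<and> v \<in> Nset}"

definition setmul :: "('m::finite) lmat set \<Rightarrow> 'm lmat set \<Rightarrow> 'm lmat set" where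
  "setmul A B = {x ** y | x y. x \<in> A \<and> y \<in> B}"

definition conjset :: "('m::finite) lmat \<Rightarrow> 'm lmat set \<Rightarrow> 'm lmat set" where
  "conjset g S = {g ** x ** matrix_inv g | x. x \<in> S}"

definition Omega :: "('m::finite) lmat set \<Rightarrow> real \<Rightarrow> 'm lmat set" where
  "Omega eta s = {v ** aa t ** k | v t k. v \<in> eta \<and> t \<ge> s \<and> k \<in> Kset}"

definition discrete_set :: "('m::finite) lmat set \<Rightarrow> bool" where
  "discrete_set S \<longleftrightarrow> (\<forall>g\<in>S. \<exists>e>0. \<forall>h\<in>S. dist h g < e \<longrightarrow> h = g)"

definition is_subgroup :: "('m::finite) lmat set \<Rightarrow> 'm lmat set \<Rightarrow> bool" where
  "is_subgroup H S \<longleftrightarrow> H \<subseteq> S \<and> mat 1 \<in> H \<and>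
     (\<forall>x\<in>H. \<forall>y\<in>H. x ** y \<in> H) \<and> (\<forall>x\<in>H. matrix_inv x \<in> H)"

definition cocompact_lattice :: "('m::finite) lmat set \<Rightarrow> 'm lmat set \<Rightarrow> bool" where
  "cocompact_lattice L H \<longleftrightarrow> is_subgroup L H \<and> discrete_set L \<and>
     (\<exists>C. compact C \<and> C \<subseteq> H \<and> H = setmul L C)"

end

theory Submission
  imports Defs
begin

lemma UNIV_oo: "(UNIV :: 'm option option set) = insert None (insert (Some None) (range (\<lambda>b. Some (Some b))))"
proof -
  have "x \<in> insert None (insert (Some None) (range (\<lambda>b. Some (Some b))))" for x :: "'m option option"
    proof (cases x)
    case (Some y) then show ?thesis by (cases y) auto
  qed simp
  then show ?thesis by blast
qed

lemma sum_oo: "sum f (UNIV :: ('m::finite) option option set) = f None + f (Some None) + (\<Sum>b\<in>UNIV. f (Some (Some b)))"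
  by (subst UNIV_oo) (simp add: sum.reindex inj_on_def image_iff add.assoc)

lemma mm_entry: "(A ** B) $ i $ j = (\<Sum>k\<in>UNIV. A$i$k * B$k$j)"
  by (simp add: matrix_matrix_mult_def)

lemma oo_cases: obtains "i = None" | "i = Some None" | a where "i = Some (Some a)"
proof (cases i)
  case (Some y) then show ?thesis using that by (cases y) auto
qed (use that in auto)

lemma aa_e[simp]:
  "aa t $ None $ None = cosh t" "aa t $ None $ Some None = sinh t" "aa t $ None $ Some (Some b) = 0"
  "aa t $ Some None $ None = sinh t" "aa t $ Some None $ Some None = cosh t" "aa t $ Some None $ Some (Some b) = 0"
  "aa t $ Some (Some a) $ None = 0" "aa t $ Some (Some a) $ Some None = 0"
  "aa t $ Some (Some a) $ Some (Some b) = (if a = b then 1 else 0)"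
  by (simp_all add: aa_def)

lemma uu_e[simp]:
  "uu x $ None $ None = 1 + (x \<bullet> x)/2" "uu x $ None $ Some None = - ((x \<bullet> x)/2)" "uu x $ None $ Some (Some b) = x $ b"
  "uu x $ Some None $ None = (x \<bullet> x)/2" "uu x $ Some None $ Some None = 1 - (x \<bullet> x)/2" "uu x $ Some None $ Some (Some b) = x $ b"
  "uu x $ Some (Some a) $ None = x $ a" "uu x $ Some (Some a) $ Some None = - (x $ a)"
  "uu x $ Some (Some a) $ Some (Some b) = (if a = b then 1 else 0)"
  by (simp_all add: uu_def Let_def)

lemma if10_mult[simp]: "(if P then 1 else 0) * (y::real) = (if P then y else 0)" "y * (if P then 1 else 0) = (if P then y else 0)"
  by simp_all

lemma aa_mult: "aa r ** aa s = (aa (r + s) :: ('m::finite) lmat)"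
  apply (simp add: vec_eq_iff mm_entry sum_oo)
  apply (intro allI)
  subgoal for i j
    apply (cases i rule: oo_cases; cases j rule: oo_cases)
    apply (simp_all add: cosh_add sinh_add algebra_simps)
    done
  done

lemma aa_uu: "aa t ** uu x = uu (exp t *\<^sub>R x) ** (aa t :: ('m::finite) lmat)"
  apply (simp add: vec_eq_iff mm_entry sum_oo)
  apply (intro allI)
  subgoal for i j
    apply (cases i rule: oo_cases; cases j rule: oo_cases)
    apply (simp_all add: cosh_def sinh_def algebra_simps exp_minus_inverse)
    done
  done

lemma K_col: assumes "k \<in> Kset" shows "k $ i $ None = (if i = None then 1 else 0)"
proof -
  have "(k *v axis None 1) $ i = axis None 1 $ i" using assms by (simp add: Kset_def)
  then show ?thesis by (simp add: matrix_vector_mult_def axis_def if10_mult)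
qed

lemma M_K: "m \<in> Mset \<Longrightarrow> m \<in> Kset" by (simp add: Mset_def)

lemma two_eq:
  assumes "x = cosh 1 * x + sinh 1 * (y::real)" "x = cosh 1 * x - sinh 1 * y"
  shows "x = 0 \<and> y = 0"
proof -
  have "2 * x = 2 * cosh 1 * x" using assms by linarith
  then have "(cosh 1 - 1) * x = 0" by (simp add: algebra_simps)
  moreover have "cosh (1::real) \<noteq> 1" by simp
  ultimately have x: "x = 0" by simp
  then have "sinh 1 * y = 0" using assms by simp
  then show ?thesis using x by simp
qed

lemma M_struct:
  assumes m: "m \<in> Mset"
  shows "m $ None $ j = (if j = None then 1 else 0)"
    "m $ Some None $ j = (if j = Some None then 1 else 0)"
    "m $ i $ Some None = (if i = Some None then 1 else 0)"
proof -
  have kc: "\<And>i. m $ i $ None = (if i = None then 1 else 0)" using K_col[OF M_K[OF m]] .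
  have c: "\<And>t i j. (m ** aa t) $ i $ j = (aa t ** m) $ i $ j" using m by (simp add: Mset_def)
  have r01: "m $ None $ Some (Some b) = 0 \<and> m $ Some None $ Some (Some b) = 0" for b
  proof -
    have "\<And>t. m $ None $ Some (Some b) = cosh t * m $ None $ Some (Some b) + sinh t * m $ Some None $ Some (Some b)"
      using c[of _ None "Some (Some b)"] by (simp add: mm_entry sum_oo kc)
    from this[of 1] this[of "-1"] show ?thesis by (intro two_eq) simp_all
  qed
  have m01: "m $ None $ Some None = 0"
    using c[of 1 "Some None" "Some None"] by (simp add: mm_entry sum_oo kc r01)
  have m11: "m $ Some None $ Some None = 1"
    using c[of 1 "Some None" None] by (simp add: mm_entry sum_oo kc r01)
  have ma1: "m $ Some (Some a) $ Some None = 0" for a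
  proof -
    have "m $ Some (Some a) $ Some None * cosh 1 = m $ Some (Some a) $ Some None"
      using c[of 1 "Some (Some a)" "Some None"] by (simp add: mm_entry sum_oo kc r01)
    then have "m $ Some (Some a) $ Some None * (cosh 1 - 1) = 0" by (simp add: algebra_simps)
    then show ?thesis by simp
  qed
  show "m $ None $ j = (if j = None then 1 else 0)"
    by (cases j rule: oo_cases) (simp_all add: kc m01 r01)
  show "m $ Some None $ j = (if j = Some None then 1 else 0)"
    by (cases j rule: oo_cases) (simp_all add: kc m11 r01)
  show "m $ i $ Some None = (if i = Some None then 1 else 0)"
    by (cases i rule: oo_cases) (simp_all add: m01 m11 ma1)
qed

lemma tr_e[simp]: "transpose A $ i $ j = A $ j $ i" by (simp add: transpose_def)

lemma J_e[simp]: "(Jform :: ('m::finite) lmat) $ i $ j = (if i = j then (if i = None then -1 else 1) else 0)"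
  by (simp add: Jform_def)

definition Rm :: "('m::finite) lmat \<Rightarrow> real^'m^'m" where
  "Rm m = (\<chi> a b. m $ Some (Some a) $ Some (Some b))"

lemma M_orth: assumes m: "m \<in> Mset" shows "transpose (Rm m) ** Rm m = mat 1"
proof -
  have G: "transpose m ** Jform ** m = Jform" using m by (simp add: Mset_def Kset_def Gset_def)
  show ?thesis
  proof (simp add: vec_eq_iff, intro allI)
    fix a b
    have "(transpose m ** Jform ** m) $ Some (Some a) $ Some (Some b) = Jform $ Some (Some a) $ Some (Some b)"
      using G by simp
    then show "(transpose (Rm m) ** Rm m) $ a $ b = mat 1 $ a $ b"
      by (simp add: mm_entry sum_oo M_struct[OF m] Rm_def mat_def if_distrib cong: if_cong)
  qed
qed

lemma M_uu: assumes m: "m \<in> Mset" shows "m ** uu z = uu (Rm m *v z) ** m"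
proof -
  define R where "R = Rm m"
  define z' where "z' = R *v z"
  have o: "transpose R ** R = mat 1" using M_orth[OF m] by (simp add: R_def)
  have F1: "z' \<bullet> z' = z \<bullet> z"
  proof -
    have "z' \<bullet> z' = (z v* transpose R) \<bullet> (R *v z)" by (simp add: z'_def)
    also have "\<dots> = z \<bullet> (transpose R *v (R *v z))" by (rule dot_lmul_matrix)
    also have "\<dots> = z \<bullet> z" by (simp add: matrix_vector_mul_assoc o)
    finally show ?thesis .
  qed
  have F2: "(\<Sum>c\<in>UNIV. z' $ c * R $ c $ b) = z $ b" for b
  proof -
    have "z' v* R = (z v* transpose R) v* R" by (simp add: z'_def)
    also have "\<dots> = z" by (simp only: vector_matrix_mul_assoc o vector_matrix_mul_rid)
    finally have "z' v* R = z" .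
    then show ?thesis by (simp add: vector_matrix_mult_def vec_eq_iff mult.commute)
  qed
  have F3: "(\<Sum>c\<in>UNIV. R $ a $ c * z $ c) = z' $ a" for a
    by (simp add: z'_def matrix_vector_mult_def)
  have Re: "m $ Some (Some a) $ Some (Some b) = R $ a $ b" for a b by (simp add: R_def Rm_def)
  show ?thesis unfolding z'_def[symmetric] R_def[symmetric]
  proof (simp add: vec_eq_iff, intro allI)
    fix i j
    show "(m ** uu z) $ i $ j = (uu z' ** m) $ i $ j"
      by (cases i rule: oo_cases; cases j rule: oo_cases)
         (simp_all add: mm_entry sum_oo M_struct[OF m] K_col[OF M_K[OF m]] Re F1 F2 F3 sum_negf)
  qed
qed

definition vv :: "real^('m::finite) option option" where
  "vv = (\<chi> i. if i = None then 1 else if i = Some None then -1 else 0)"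

lemma vv_mul_e: "(vv v* X) $ j = X $ None $ j - X $ Some None $ j"
  by (simp add: vv_def vector_matrix_mult_def sum_oo)

lemma vv_None[simp]: "vv $ None = 1" by (simp add: vv_def)

lemma vv_uu: "vv v* uu y = vv"
proof (simp add: vec_eq_iff vv_mul_e, intro allI)
  fix j :: "'a option option"
  show "uu y $ None $ j - uu y $ Some None $ j = vv $ j"
    by (cases j rule: oo_cases) (simp_all add: vv_def)
qed

lemma vv_aa: "vv v* aa t = exp (-t) *\<^sub>R (vv :: real^('m::finite) option option)"
proof (simp add: vec_eq_iff vv_mul_e, intro allI)
  fix j :: "'m option option"
  show "aa t $ None $ j - aa t $ Some None $ j = exp (-t) * vv $ j"
    by (cases j rule: oo_cases) (simp_all add: vv_def cosh_minus_sinh sinh_minus_cosh)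
qed

lemma vv_M: "m \<in> Mset \<Longrightarrow> vv v* m = vv"
  by (simp add: vec_eq_iff vv_mul_e M_struct) (simp add: vv_def)

lemma vmul_scale: "(c *\<^sub>R x) v* A = c *\<^sub>R (x v* (A::real^'n^'k))"
  by (simp add: vec_eq_iff vector_matrix_mult_def sum_distrib_left algebra_simps)

lemma vmul_mm: "x v* (A ** B) = (x v* A) v* B"
  by (simp add: vector_matrix_mul_assoc)

lemma minv_ok: assumes "invertible (A::real^'n^'n)"
  shows "matrix_inv A ** A = mat 1" "A ** matrix_inv A = mat 1"
proof -
  have "\<exists>A'. A ** A' = mat 1 \<and> A' ** A = mat 1" using assms by (simp add: invertible_def)
  then have "A ** matrix_inv A = mat 1 \<and> matrix_inv A ** A = mat 1"
    unfolding matrix_inv_def by (rule someI_ex)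
  then show "matrix_inv A ** A = mat 1" "A ** matrix_inv A = mat 1" by auto
qed

lemma minv_1: "matrix_inv (mat 1 :: real^'n^'n) = mat 1"
proof -
  have "invertible (mat 1 :: real^'n^'n)" by (auto simp: invertible_def)
  from minv_ok(2)[OF this] show ?thesis by simp
qed

lemma G_inv: "g \<in> Gset \<Longrightarrow> invertible g"
  by (simp add: Gset_def invertible_det_nz)

lemma conj1: "conjset (mat 1) S = S"
  by (simp add: conjset_def minv_1)

lemma NAK:
  assumes m: "m \<in> Mset"
  shows "m ** aa r ** uu y ** aa s = uu (Rm m *v (exp r *\<^sub>R y)) ** aa (r + s) ** m"
proof -
  have "m ** aa r ** uu y ** aa s = m ** (aa r ** uu y) ** aa s" by (simp add: matrix_mul_assoc)
  also have "\<dots> = (m ** uu (exp r *\<^sub>R y)) ** (aa r ** aa s)" by (simp add: aa_uu matrix_mul_assoc)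
  also have "\<dots> = uu (Rm m *v (exp r *\<^sub>R y)) ** (m ** aa (r + s))" by (simp add: M_uu[OF m] aa_mult matrix_mul_assoc)
  also have "m ** aa (r + s) = aa (r + s) ** m" using m by (simp add: Mset_def)
  finally show ?thesis by (simp add: matrix_mul_assoc)
qed

lemma cancel_inv: "invertible (A::real^'n^'n) \<Longrightarrow> X ** matrix_inv A ** A = (X::real^'n^'k)"
  by (simp add: matrix_mul_assoc[symmetric] minv_ok(1))

lemma Pchar: "m \<in> Mset \<Longrightarrow> vv v* (m ** aa r ** uu y) = exp (-r) *\<^sub>R vv"
  by (simp add: vmul_mm vv_M vv_aa vmul_scale vv_uu)

lemma vinv: "invertible (Q::real^'n^'n) \<Longrightarrow> (x v* Q) v* matrix_inv Q = x"
  by (simp add: vector_matrix_mul_assoc minv_ok(2))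

lemma key_bound:
  fixes \<Gamma> \<Xi> C :: "('m::finite) lmat set" and s0 :: real and \<xi> :: "'m lmat"
  assumes Gam: "is_subgroup \<Gamma> Gset" and XiG: "\<Xi> \<subseteq> Gset" and one: "mat 1 \<in> \<Xi>" and xi: "\<xi> \<in> \<Xi>"
   and CN: "C \<subseteq> Nset" and NC: "Nset = setmul (\<Gamma> \<inter> Nset) C" and Lsub: "is_subgroup (\<Gamma> \<inter> Nset) Nset"
   and Ffin: "finite {\<gamma> \<in> \<Gamma>. setmul {\<gamma>} (setmul \<Xi> (Omega C s0)) \<inter> Omega C s0 \<noteq> {}}"
  shows "\<exists>B. \<forall>\<gamma>\<in>\<Gamma>. \<forall>m\<in>Mset. \<forall>r y. \<gamma> ** \<xi> = m ** aa r ** uu y \<longrightarrow> exp (-r) \<le> B"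
proof (cases "\<exists>\<gamma>1\<in>\<Gamma>. \<exists>m1\<in>Mset. \<exists>r1 y1. \<gamma>1 ** \<xi> = m1 ** aa r1 ** uu y1")
  case False
  then show ?thesis by blast
next
  case True
  then obtain \<gamma>1 m1 r1 y1 where g1: "\<gamma>1 \<in> \<Gamma>" and m1: "m1 \<in> Mset" and e1: "\<gamma>1 ** \<xi> = m1 ** aa r1 ** uu y1"
    by blast
  define F where "F = {\<gamma> \<in> \<Gamma>. setmul {\<gamma>} (setmul \<Xi> (Omega C s0)) \<inter> Omega C s0 \<noteq> {}}"
  define cval :: "'m lmat \<Rightarrow> real" where "cval g = (vv v* g) $ None" for g
  have GG: "\<Gamma> \<subseteq> Gset" "\<And>x y. x \<in> \<Gamma> \<Longrightarrow> y \<in> \<Gamma> \<Longrightarrow> x ** y \<in> \<Gamma>" "\<And>x. x \<in> \<Gamma> \<Longrightarrow> matrix_inv x \<in> \<Gamma>"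
    using Gam by (auto simp: is_subgroup_def)
  have lat: "\<exists>l. l \<in> \<Gamma> \<and> l \<in> Nset \<and> l ** uu z \<in> C" for z
  proof -
    have "uu z \<in> Nset" by (simp add: Nset_def)
    then obtain l0 c where l0: "l0 \<in> \<Gamma>" "l0 \<in> Nset" and c: "c \<in> C" and ez: "uu z = l0 ** c"
      using NC \<open>uu z \<in> Nset\<close> unfolding setmul_def by blast
    have "matrix_inv l0 \<in> \<Gamma> \<inter> Nset" using Lsub l0 by (auto simp: is_subgroup_def)
    moreover have "invertible l0" using l0 GG(1) G_inv by blast
    then have "matrix_inv l0 ** uu z = c" by (simp add: ez matrix_mul_assoc minv_ok)
    ultimately show ?thesis using c by blast
  qed
  have inN: "vv v* (l ** X) = vv v* X" if "l \<in> Nset" for l X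
    using that by (auto simp: Nset_def vmul_mm vv_uu)
  show ?thesis
  proof (intro exI ballI allI impI)
    fix \<gamma> m r y assume g: "\<gamma> \<in> \<Gamma>" and m: "m \<in> Mset" and e: "\<gamma> ** \<xi> = m ** aa r ** uu y"
    define s' where "s' = s0 + \<bar>r\<bar> + \<bar>r1\<bar>"
    define z1 where "z1 = Rm m1 *v (exp r1 *\<^sub>R y1)"
    define z2 where "z2 = Rm m *v (exp r *\<^sub>R y)"
    obtain l1 where l1: "l1 \<in> \<Gamma>" "l1 \<in> Nset" "l1 ** uu z1 \<in> C" using lat by blast
    obtain l2 where l2: "l2 \<in> \<Gamma>" "l2 \<in> Nset" "l2 ** uu z2 \<in> C" using lat by blast
    define \<omega> where "\<omega> = l1 ** (\<gamma>1 ** \<xi> ** aa s')"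
    have h\<omega>: "\<omega> = (l1 ** uu z1) ** aa (r1 + s') ** m1"
      unfolding \<omega>_def e1 NAK[OF m1] z1_def by (simp add: matrix_mul_assoc)
    have K1: "m1 \<in> Kset" "m \<in> Kset" using m1 m M_K by auto
    have \<omega>O: "\<omega> \<in> Omega C s0"
      unfolding Omega_def h\<omega>
      by (rule CollectI, rule exI, rule exI, rule exI, rule conjI[OF refl]) (use l1(3) K1 in \<open>auto simp: s'_def\<close>)
    define g where "g = l2 ** \<gamma> ** matrix_inv \<gamma>1 ** matrix_inv l1"
    have gG: "g \<in> \<Gamma>" unfolding g_def using GG l1 l2 g g1 by simp
    have inv: "invertible \<gamma>1" "invertible l1" "invertible \<xi>" using GG(1) g1 l1 xi XiG G_inv by auto
    have hg: "g ** (l1 ** (\<gamma>1 ** Y)) = l2 ** (\<gamma> ** Y)" for Y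
      unfolding g_def by (simp add: matrix_mul_assoc cancel_inv inv)
    have "g ** \<omega> = l2 ** (\<gamma> ** (\<xi> ** aa s'))"
      unfolding \<omega>_def by (simp only: matrix_mul_assoc[symmetric] hg)
    also have "\<dots> = l2 ** (\<gamma> ** \<xi> ** aa s')" by (simp add: matrix_mul_assoc)
    also have "\<dots> = l2 ** (uu z2 ** aa (r + s') ** m)" by (simp only: e NAK[OF m] z2_def)
    finally have g\<omega>: "g ** \<omega> = (l2 ** uu z2) ** aa (r + s') ** m" by (simp add: matrix_mul_assoc)
    have g\<omega>O: "g ** \<omega> \<in> Omega C s0"
      unfolding Omega_def g\<omega>
      by (rule CollectI, rule exI, rule exI, rule exI, rule conjI[OF refl]) (use l2(3) K1 in \<open>auto simp: s'_def\<close>)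
    have "g ** (mat 1 ** \<omega>) \<in> setmul {g} (setmul \<Xi> (Omega C s0))"
      unfolding setmul_def using one \<omega>O matrix_mul_lid[of \<omega>] by blast
    then have gF: "g \<in> F" unfolding F_def using gG g\<omega>O by auto
    define Q where "Q = l1 ** (\<gamma>1 ** \<xi>)"
    have Qinv: "invertible Q" unfolding Q_def using inv by (simp add: invertible_mult)
    have gQ: "g ** Q = l2 ** (\<gamma> ** \<xi>)" unfolding Q_def by (rule hg)
    have vQ: "vv v* Q = exp (-r1) *\<^sub>R vv" unfolding Q_def using l1(2) by (simp add: inN e1 Pchar m1)
    have vgQ: "(vv v* g) v* Q = exp (-r) *\<^sub>R vv"
      using l2(2) by (simp add: vmul_mm[symmetric] gQ inN e Pchar m)
    have vQi: "(vv v* Q) v* matrix_inv Q = vv"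
      by (rule vinv[OF Qinv])
    have "vv v* g = ((vv v* g) v* Q) v* matrix_inv Q"
      by (rule vinv[OF Qinv, symmetric])
    also have "\<dots> = (exp (-r) * exp r1) *\<^sub>R ((vv v* Q) v* matrix_inv Q)"
      by (simp add: vgQ vQ vmul_scale exp_minus_inverse mult.commute)
    also have "\<dots> = (exp (-r) * exp r1) *\<^sub>R vv" by (simp only: vQi)
    finally have "cval g = exp (-r) * exp r1" by (simp add: cval_def)
    moreover have "exp (-r1) * (exp (-r) * exp r1) = exp (-r)" by (simp add: exp_add[symmetric])
    ultimately have "exp (-r) = exp (-r1) * cval g" by simp
    also have "cval g \<le> (\<Sum>h\<in>F. \<bar>cval h\<bar>)"
    proof -
      have "\<bar>cval g\<bar> \<le> (\<Sum>h\<in>F. \<bar>cval h\<bar>)"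
        by (rule member_le_sum) (use gF Ffin[folded F_def] in auto)
      then show ?thesis by linarith
    qed
    then have "exp (-r1) * cval g \<le> exp (-r1) * (\<Sum>h\<in>F. \<bar>cval h\<bar>)" by simp
    finally show "exp (-r) \<le> exp (-r1) * (\<Sum>h\<in>F. \<bar>cval h\<bar>)" .
  qed
qed


theorem proposition3p1:
  fixes \<Gamma> :: "('m::finite) lmat set" and \<Xi> :: "'m lmat set" and \<eta>0 :: "'m lmat set"
    and s0 :: real and \<sigma> :: "'m lmat"
  assumes sigK: "\<sigma> \<in> Kset" and sig2: "\<sigma> ** \<sigma> = mat 1"
    and sigA: "\<forall>t. \<sigma> ** aa t ** matrix_inv \<sigma> = aa (- t)"
    and Gam_sub: "is_subgroup \<Gamma> Gset" and Gam_disc: "discrete_set \<Gamma>"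
    and s0_pos: "s0 > 0"
    and eta0: "compact \<eta>0" "\<eta>0 \<subseteq> Nset"
    and Xi: "finite \<Xi>" "\<Xi> \<subseteq> Gset" "mat 1 \<in> \<Xi>"
    and i: "Gset = setmul \<Gamma> (setmul \<Xi> (Omega \<eta>0 s0))"
    and ii: "\<forall>\<xi>\<in>\<Xi>. cocompact_lattice (\<Gamma> \<inter> conjset \<xi> Nset) (conjset \<xi> Nset)"
    and iii: "\<forall>\<eta>. compact \<eta> \<and> \<eta> \<subseteq> Nset \<longrightarrow>
       finite {\<gamma> \<in> \<Gamma>. setmul {\<gamma>} (setmul \<Xi> (Omega \<eta> s0)) \<inter> Omega \<eta> s0 \<noteq> {}}"
    and iv: "\<forall>\<eta>. compact \<eta> \<and> \<eta>0 \<subseteq> \<eta> \<and> \<eta> \<subseteq> Nset \<longrightarrow>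
       (\<exists>s1>s0. \<forall>\<gamma>\<in>\<Gamma>. \<forall>\<xi>1\<in>\<Xi>. \<forall>\<xi>2\<in>\<Xi>.
          setmul {\<gamma> ** \<xi>1} (Omega \<eta> s0) \<inter> setmul {\<xi>2} (Omega \<eta> s1) \<noteq> {} \<longrightarrow>
          \<xi>1 = \<xi>2 \<and> \<gamma> \<in> conjset \<xi>1 (setmul Nset Mset))"
  shows "\<exists>t0>0. \<forall>x :: real^'m. \<forall>t. t > t0 \<longrightarrow>
     (\<forall>\<gamma> \<xi> v s k. \<gamma> \<in> \<Gamma> \<and> \<xi> \<in> \<Xi> \<and> v \<in> Nset \<and> s > s0 \<and> k \<in> Kset \<and>
        uu x ** \<sigma> ** aa t = \<gamma> ** \<xi> ** v ** aa s ** k \<longrightarrow> \<gamma> ** \<xi> \<notin> Pset)"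
  proof -
  have c1: "cocompact_lattice (\<Gamma> \<inter> Nset) Nset" using ii Xi(3) by (metis conj1)
  then obtain C where Cc: "compact C" and CN: "C \<subseteq> Nset" and NC: "Nset = setmul (\<Gamma> \<inter> Nset) C"
    and Lsub: "is_subgroup (\<Gamma> \<inter> Nset) Nset"
    by (auto simp: cocompact_lattice_def)
  have Ffin: "finite {\<gamma> \<in> \<Gamma>. setmul {\<gamma>} (setmul \<Xi> (Omega C s0)) \<inter> Omega C s0 \<noteq> {}}"
    using iii Cc CN by blast
  have "\<forall>\<xi>\<in>\<Xi>. \<exists>B. \<forall>\<gamma>\<in>\<Gamma>. \<forall>m\<in>Mset. \<forall>r y. \<gamma> ** \<xi> = m ** aa r ** uu y \<longrightarrow> exp (-r) \<le> B"
    using key_bound[OF Gam_sub Xi(2) Xi(3) _ CN NC Lsub Ffin] by blast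
  then obtain Bf where Bf: "\<And>\<xi> \<gamma> m r y. \<xi> \<in> \<Xi> \<Longrightarrow> \<gamma> \<in> \<Gamma> \<Longrightarrow> m \<in> Mset \<Longrightarrow>
      \<gamma> ** \<xi> = m ** aa r ** uu y \<Longrightarrow> exp (-r) \<le> Bf \<xi>"
    by metis
  define Bt where "Bt = (\<Sum>\<xi>\<in>\<Xi>. \<bar>Bf \<xi>\<bar>)"
  have Bt0: "Bt \<ge> 0" unfolding Bt_def by (simp add: sum_nonneg)
  have Bt: "exp (-r) \<le> Bt" if "\<xi> \<in> \<Xi>" "\<gamma> \<in> \<Gamma>" "m \<in> Mset" "\<gamma> ** \<xi> = m ** aa r ** uu y" for \<xi> \<gamma> m r y
  proof -
    have "Bf \<xi> \<le> \<bar>Bf \<xi>\<bar>" by simp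
    also have "\<bar>Bf \<xi>\<bar> \<le> Bt" unfolding Bt_def by (rule member_le_sum) (use that Xi(1) in auto)
    finally show ?thesis using Bf[OF that] by linarith
  qed
  have sinv: "invertible \<sigma>" using sig2 by (auto simp: invertible_def)
  have sa: "\<sigma> ** aa t = aa (- t) ** \<sigma>" for t
  proof -
    have "\<sigma> ** aa t = \<sigma> ** aa t ** matrix_inv \<sigma> ** \<sigma>" by (simp add: cancel_inv sinv)
    also have "\<dots> = aa (- t) ** \<sigma>" using sigA by simp
    finally show ?thesis .
  qed
  have vs: "(vv v* \<sigma>) $ None = 1" using K_col[OF sigK] by (simp add: vv_mul_e)
  show ?thesis
  proof (intro exI[of _ "max 1 (ln (Bt + 1))"] conjI allI impI notI)
    show "0 < max 1 (ln (Bt + 1))" by simp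
  next
    fix x :: "real^'m" and t \<gamma> \<xi> v s k
    assume t: "max 1 (ln (Bt + 1)) < t"
      and H: "\<gamma> \<in> \<Gamma> \<and> \<xi> \<in> \<Xi> \<and> v \<in> Nset \<and> s > s0 \<and> k \<in> Kset \<and>
        uu x ** \<sigma> ** aa t = \<gamma> ** \<xi> ** v ** aa s ** k"
      and P: "\<gamma> ** \<xi> \<in> Pset"
    from P obtain m r w where m: "m \<in> Mset" and w: "w \<in> Nset" and e: "\<gamma> ** \<xi> = m ** aa r ** w"
      by (auto simp: Pset_def)
    from w obtain y where y: "w = uu y" by (auto simp: Nset_def)
    from H obtain y' where y': "v = uu y'" by (auto simp: Nset_def)
    have "vv v* (uu x ** \<sigma> ** aa t) = vv v* (uu x ** (aa (-t) ** \<sigma>))"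
      by (simp add: matrix_mul_assoc[symmetric] sa)
    also have "\<dots> = exp t *\<^sub>R (vv v* \<sigma>)" by (simp add: vmul_mm vv_uu vv_aa vmul_scale)
    finally have L: "(vv v* (uu x ** \<sigma> ** aa t)) $ None = exp t" using vs by simp
    have "vv v* (\<gamma> ** \<xi> ** v ** aa s ** k) = ((((vv v* (m ** aa r ** uu y)) v* uu y') v* aa s) v* k)"
      by (simp add: vmul_mm e y y')
    also have "\<dots> = (exp (-r) * exp (-s)) *\<^sub>R (vv v* k)"
      by (simp add: Pchar m vmul_scale vv_uu vv_aa)
    finally have R: "(vv v* (\<gamma> ** \<xi> ** v ** aa s ** k)) $ None = exp (-r) * exp (-s)"
      using K_col[of k] H by (simp add: vv_mul_e)
    have "exp t = exp (-r) * exp (-s)" using L R H by simp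
    then have er: "exp (-r) = exp t * exp s" by (simp add: exp_minus field_simps)
    have "exp s \<ge> 1" using H s0_pos by simp
    then have "exp (-r) \<ge> exp t" unfolding er by simp
    moreover have "exp t > Bt + 1"
    proof -
      have "ln (Bt + 1) < t" using t by simp
      then have "exp (ln (Bt + 1)) < exp t" by simp
      then show ?thesis using Bt0 by simp
    qed
    moreover have "exp (-r) \<le> Bt" using Bt[of \<xi> \<gamma> m r y] H m e y by simp
    ultimately show False by linarith
  qed
qed

end
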